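(* Let $p$ be a prime, $q$ a power of $p$, $V$ a finite-dimensional $\mathbb{F}_q$-vector space, and $k=q^ar$ with integers $a\ge0$, $1\le r\le q-1$. For each nonzero $y\in V^*$ and any linear complement $W$ of $\mathbb{F}_q y$ in $V^*$, one has the equality of ideals of $\mathrm{Sym}^*(V^* )$ $$I(V^*,k)+(y^k)=I(W,qk)+(y^k),$$ where $I(W,qk)$ denotes the ideal of $\mathrm{Sym}^*(V^* )$ generated by the generators of $I(W,qk)\subset\mathrm{Sym}^*(W)$.
   Context: For a finite-dimensional $\mathbb{F}_q$-vector space $U$ (here $U=V^*$ or $U=W$), fix for each line $\ell$ of $U$ a nonzero $u_\ell\in\ell$; for a hyperplane $H$ of $U$, $V_{H,U}=\prod_{\ell\subset U,\ \ell\not\subset H}u_\ell$; $I(U,m)$ is the ideal of $\mathrm{Sym}^*(U)$ generated by all $V_{H,U}^m$ with $H$ a hyperplane of $U$ (independent, up to units, of the choice of $u_\ell$). *)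

theory Defs
  imports "HOL-Analysis.Analysis" "HOL-Library.Poly_Mapping"
begin

text \<open>Model: V^* is the coordinate space 'k^'n (coordinates w.r.t. a fixed basis of V^*),
  and Sym^*(V^*) is the polynomial ring 'k[x_i | i :: 'n], represented as polynomial mappings
  from monomials to coefficients.\<close>

type_synonym ('k, 'n) sympoly = "('n \<Rightarrow>\<^sub>0 nat) \<Rightarrow>\<^sub>0 'k"

definition lin :: "'k::field ^ 'n::finite \<Rightarrow> ('k, 'n) sympoly" where
  "lin u = (\<Sum>i\<in>UNIV. Poly_Mapping.single (Poly_Mapping.single i 1) (u $ i))"

definition gen_ideal :: "'a::comm_ring_1 set \<Rightarrow> 'a set" where
  "gen_ideal S = {x. \<exists>F c. finite F \<and> F \<subseteq> S \<and> x = (\<Sum>g\<in>F. c g * g)}"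

definition ideal_sum :: "'a::comm_ring_1 set \<Rightarrow> 'a set \<Rightarrow> 'a set" where
  "ideal_sum I J = gen_ideal (I \<union> J)"

definition lines_of :: "('k::field ^ 'n::finite) set \<Rightarrow> ('k ^ 'n) set set" where
  "lines_of U = {vec.span {u} | u. u \<in> U \<and> u \<noteq> 0}"

definition hyperplanes_of :: "('k::field ^ 'n::finite) set \<Rightarrow> ('k ^ 'n) set set" where
  "hyperplanes_of U = {H. vec.subspace H \<and> H \<subseteq> U \<and> vec.dim H + 1 = vec.dim U}"

definition line_rep :: "('k::field ^ 'n::finite) set \<Rightarrow> 'k ^ 'n" where
  "line_rep l = (SOME u. u \<in> l \<and> u \<noteq> 0)"

definition VH :: "('k::field ^ 'n::finite) set \<Rightarrow> ('k ^ 'n) set \<Rightarrow> ('k, 'n) sympoly" where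
  "VH U H = (\<Prod>l\<in>{l \<in> lines_of U. \<not> l \<subseteq> H}. lin (line_rep l))"

definition I_ideal :: "('k::field ^ 'n::finite) set \<Rightarrow> nat \<Rightarrow> ('k, 'n) sympoly set" where
  "I_ideal U m = gen_ideal {VH U H ^ m | H. H \<in> hyperplanes_of U}"

end

theory Submission
  imports Defs "HOL-Computational_Algebra.Polynomial" "HOL-Computational_Algebra.Primes" "HOL-Number_Theory.Residues"
begin


definition Cst :: "'k::comm_ring_1 \<Rightarrow> ('k, 'n) sympoly" where
  "Cst c = Poly_Mapping.single 0 c"

lemma Cst_mult: "Cst (a * b) = Cst a * Cst b"
  by (simp add: Cst_def mult_single)
lemma Cst_add: "Cst (a + b) = Cst a + Cst b"
  by (simp add: Cst_def single_add)
lemma Cst_0[simp]: "Cst 0 = 0" by (simp add: Cst_def)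
lemma Cst_1[simp]: "Cst 1 = 1" by (simp add: Cst_def)
lemma Cst_prod: "Cst (\<Prod>x\<in>A. f x) = (\<Prod>x\<in>A. Cst (f x))"
  by (induct A rule: infinite_finite_induct) (auto simp: Cst_mult)
lemma Cst_power: "Cst (a ^ n) = Cst a ^ n"
  by (induct n) (auto simp: Cst_mult)

lemma lin_add: "lin (u + v) = lin u + lin v"
  by (simp add: lin_def single_add sum.distrib)

lemma lin_scale: "lin (c *s u) = Cst c * lin u"
  by (simp add: lin_def Cst_def sum_distrib_left mult_single)


lemma ff_pow_card: "(x::'a::{field,finite}) ^ CARD('a) = x"
proof (cases "x = 0")
  case False
  have "x * (\<Prod>y\<in>UNIV-{0}. x * y) = x * x ^ (card (UNIV :: 'a set) - 1) * \<Prod>(UNIV-{0})"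
    by (simp add: prod.distrib mult_ac)
  also have "x * x ^ (card (UNIV :: 'a set) - 1) = x ^ Suc (card (UNIV :: 'a set) - 1)"
    by (subst power_Suc) auto
  also have "Suc (card (UNIV :: 'a set) - 1) = card (UNIV :: 'a set)"
    using finite_UNIV_card_ge_0[where ?'a = 'a] by simp
  also have "(\<Prod>y\<in>UNIV-{0}. x * y) = (\<Prod>y\<in>UNIV-{0}. y)"
    by (rule prod.reindex_bij_witness[of _ "\<lambda>y. y / x" "\<lambda>y. x * y"]) (use False in auto)
  finally show ?thesis
    by simp
qed (use finite_UNIV_card_ge_0[where ?'a = 'a] in auto)

lemma char_k:
  assumes "prime p" "CARD('k::{field,finite}) = p ^ e"
  shows "CHAR('k) = p"
proof -
  have pc: "prime CHAR('k)"
    by (intro prime_CHAR_semidom finite_imp_CHAR_pos) simp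
  have "CHAR('k) dvd p ^ e" using CHAR_dvd_CARD[where 'a='k] assms(2) by simp
  hence "CHAR('k) dvd p" using pc prime_dvd_power by blast
  thus ?thesis using pc assms(1) primes_dvd_imp_eq by blast
qed

lemma CHAR_sympoly: "CHAR(('k::comm_ring_1, 'n) sympoly) = CHAR('k)"
proof (rule CHAR_eqI)
  show "of_nat CHAR('k) = (0::('k, 'n) sympoly)"
    by (metis of_nat_CHAR single_of_nat single_zero)
next
  fix x assume "of_nat x = (0::('k, 'n) sympoly)"
  hence "Poly_Mapping.lookup (of_nat x :: ('k, 'n) sympoly) 0 = 0" by simp
  hence "(of_nat x :: 'k) = 0" by (simp add: lookup_of_nat)
  thus "CHAR('k) dvd x" by (simp add: of_nat_eq_0_iff_char_dvd)
qed

lemma frob: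
  assumes "prime p" "CARD('k::{field,finite}) = p ^ e"
  shows "((x::('k, 'n) sympoly) + y) ^ (CARD('k) ^ a) = x ^ (CARD('k) ^ a) + y ^ (CARD('k) ^ a)"
proof -
  have c: "CHAR(('k, 'n) sympoly) = p" using CHAR_sympoly[where 'k='k and 'n='n] char_k[OF assms] by simp
  show ?thesis
    by (rule freshmans_dream'[where n="e*a"]) (use c assms in \<open>auto simp: power_mult\<close>)
qed

lemma dvd_power_diff: "(x::'a::comm_ring_1) - y dvd x ^ n - y ^ n"
  by (metis power_diff_sumr2 dvd_triv_left)

lemma dvd_prod_diff:
  assumes "\<And>i. i \<in> S \<Longrightarrow> (m::'a::comm_ring_1) dvd f i - g i"
  shows "m dvd (\<Prod>i\<in>S. f i) - (\<Prod>i\<in>S. g i)"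
  using assms
proof (induct S rule: infinite_finite_induct)
  case (insert a F)
  have "(\<Prod>i\<in>insert a F. f i) - (\<Prod>i\<in>insert a F. g i)
      = f a * ((\<Prod>i\<in>F. f i) - (\<Prod>i\<in>F. g i)) + (f a - g a) * (\<Prod>i\<in>F. g i)"
    using insert by (simp add: algebra_simps)
  thus ?case using insert by simp
qed auto

lemma prod_X_plus: "(\<Prod>c\<in>(UNIV::'k::{field,finite} set). [:c, 1:]) = Polynomial.monom 1 CARD('k) - [:0, 1:]"
proof (rule poly_eqI_degree_lead_coeff[where A=UNIV and n="CARD('k)"])
  have dp: "degree (\<Prod>c\<in>(UNIV::'k set). [:c, 1:]) = CARD('k)"
    by (subst degree_prod_eq_sum_degree) auto
  have lp: "lead_coeff (\<Prod>c\<in>(UNIV::'k set). [:c, 1:]) = 1"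
    by (subst lead_coeff_prod) auto
  have q2: "CARD('k) \<ge> 2"
  proof -
    have "{0::'k, 1} \<subseteq> UNIV" by simp
    hence "card {0::'k,1} \<le> CARD('k)" by (intro card_mono) auto
    thus ?thesis by simp
  qed
  show "Polynomial.coeff (\<Prod>c\<in>(UNIV::'k set). [:c, 1:]) CARD('k) = Polynomial.coeff (Polynomial.monom 1 CARD('k) - [:0, 1:]) CARD('k)"
    using lp dp q2 by (simp add: coeff_pCons split: nat.splits)
  show "CARD('k) \<le> card (UNIV::'k set)" by simp
  show "degree (\<Prod>c\<in>(UNIV::'k set). [:c, 1:]) \<le> CARD('k)" using dp by simp
  show "degree (Polynomial.monom (1::'k) CARD('k) - [:0, 1:]) \<le> CARD('k)"
    using q2 by (intro order.trans[OF degree_diff_le_max]) (auto simp: degree_monom_eq)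
  fix z :: 'k
  have "poly (\<Prod>c\<in>(UNIV::'k set). [:c, 1:]) z = (\<Prod>c\<in>UNIV. c + z)" by (simp add: poly_prod)
  also have "\<dots> = 0" by (rule prod_zero) (auto intro!: exI[where x="-z"])
  also have "0 = poly (Polynomial.monom 1 CARD('k) - [:0, 1:]) z" by (simp add: poly_monom ff_pow_card)
  finally show "poly (\<Prod>c\<in>(UNIV::'k set). [:c, 1:]) z = poly (Polynomial.monom 1 CARD('k) - [:0, 1:]) z" .
qed


definition homz :: "nat \<Rightarrow> 'k::comm_ring_1 poly \<Rightarrow> ('k,'n) sympoly \<Rightarrow> ('k,'n) sympoly \<Rightarrow> ('k,'n) sympoly" where
  "homz n P L Y = (\<Sum>j\<le>n. Cst (Polynomial.coeff P j) * L ^ j * Y ^ (n - j))"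

lemma homz_add: "homz n (P + Q) L Y = homz n P L Y + homz n Q L Y"
  by (simp add: homz_def Cst_add sum.distrib distrib_right)

lemma homz_diff: "homz n (P - Q) L Y = homz n P L Y - homz n Q L Y"
proof -
  have "homz n (P - Q) L Y + homz n Q L Y = homz n P L Y"
    by (simp flip: homz_add)
  thus ?thesis by (simp add: algebra_simps)
qed

lemma homz_smult:
  assumes "degree P \<le> n"
  shows "homz (Suc n) (Polynomial.smult c P) L Y = Cst c * Y * homz n P L Y"
proof -
  have "homz (Suc n) (Polynomial.smult c P) L Y = (\<Sum>j\<le>n. Cst (c * Polynomial.coeff P j) * L ^ j * Y ^ (Suc n - j))"
    using assms by (simp add: homz_def coeff_eq_0)
  also have "\<dots> = (\<Sum>j\<le>n. Cst c * Y * (Cst (Polynomial.coeff P j) * L ^ j * Y ^ (n - j)))"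
    by (intro sum.cong refl) (simp add: Cst_mult Suc_diff_le mult_ac)
  finally show ?thesis by (simp add: homz_def sum_distrib_left)
qed

lemma homz_shift:
  "homz (Suc n) (pCons 0 P) L Y = L * homz n P L Y"
proof -
  have "homz (Suc n) (pCons 0 P) L Y = (\<Sum>j\<le>n. Cst (Polynomial.coeff P j) * L ^ Suc j * Y ^ (n - j))"
    unfolding homz_def by (subst sum.atMost_Suc_shift) simp
  also have "\<dots> = L * homz n P L Y"
    by (simp add: homz_def sum_distrib_left mult_ac)
  finally show ?thesis .
qed

lemma homz_step:
  assumes "degree P \<le> n"
  shows "homz (Suc n) ([:c, 1:] * P) L Y = (L + Cst c * Y) * homz n P L Y"
proof -
  have "[:c, 1:] * P = Polynomial.smult c P + pCons 0 P" by (simp add: mult_pCons_left)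
  thus ?thesis using assms by (simp add: homz_add homz_smult homz_shift algebra_simps)
qed

lemma prod_hom:
  "finite A \<Longrightarrow> (\<Prod>c\<in>A. L + Cst c * Y) = homz (card A) (\<Prod>c\<in>A. [:c, 1:]) L Y"
proof (induct A rule: finite_induct)
  case empty
  then show ?case by (simp add: homz_def)
next
  case (insert a F)
  have d: "degree (\<Prod>c\<in>F. [:c, 1:]) \<le> card F"
    using degree_prod_sum_le[OF insert(1), of "\<lambda>c. [:c, 1:]"] by simp
  show ?case using insert homz_step[OF d, of a L Y] by simp
qed

lemma prod_lin_identity:
  "(\<Prod>c\<in>(UNIV::'k::{field,finite} set). L + Cst c * Y) = L ^ CARD('k) - L * Y ^ (CARD('k) - 1)"
proof -
  have q2: "CARD('k) \<ge> 2"
  proof -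
    have "{0::'k, 1} \<subseteq> UNIV" by simp
    hence "card {0::'k,1} \<le> CARD('k)" by (intro card_mono) auto
    thus ?thesis by simp
  qed
  have "(\<Prod>c\<in>(UNIV::'k set). L + Cst c * Y) = homz CARD('k) (Polynomial.monom 1 CARD('k) - [:0, 1:]) L Y"
    by (simp add: prod_hom prod_X_plus)
  also have "\<dots> = homz CARD('k) (Polynomial.monom 1 CARD('k)) L Y - homz CARD('k) [:0, 1:] L Y"
    by (rule homz_diff)
  also have "homz CARD('k) (Polynomial.monom 1 CARD('k)) L Y = L ^ CARD('k)"
  proof -
    have "\<And>j. Cst (Polynomial.coeff (Polynomial.monom 1 CARD('k)) j) * L ^ j * Y ^ (CARD('k) - j)
       = (if j = CARD('k) then L ^ CARD('k) else 0)"
      by (auto simp: coeff_monom)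
    thus ?thesis unfolding homz_def by simp
  qed
  also have "homz CARD('k) [:0, 1:] L Y = L * Y ^ (CARD('k) - 1)"
  proof -
    have "\<And>j. Cst (Polynomial.coeff [:0, 1:] j) * L ^ j * Y ^ (CARD('k) - j)
       = (if j = 1 then L * Y ^ (CARD('k) - 1) else 0)"
      by (auto simp: coeff_pCons split: nat.splits)
    thus ?thesis unfolding homz_def using q2 by simp
  qed
  finally show ?thesis .
qed


lemma key_cong:
  assumes "prime p" "CARD('k::{field,finite}) = p ^ e" "k = CARD('k) ^ a * r" "r \<le> CARD('k) - 1"
  shows "(Y::('k,'n) sympoly) ^ k dvd (L ^ CARD('k) - L * Y ^ (CARD('k) - 1)) ^ k - L ^ (CARD('k) * k)"
proof -
  define q where "q = CARD('k)"
  define N where "N = q ^ a"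
  have kN: "k = N * r" using assms(3) by (simp add: N_def q_def)
  define A where "A = L ^ (q * N)"
  define B where "B = Y ^ ((q - 1) * N)"
  define T where "T = (- L) ^ N"
  have "(L ^ q - L * Y ^ (q - 1)) ^ N = (L ^ q + (- (L * Y ^ (q - 1)))) ^ N" by simp
  also have "\<dots> = (L ^ q) ^ N + (- (L * Y ^ (q - 1))) ^ N"
    unfolding N_def q_def by (rule frob[OF assms(1,2)])
  also have "\<dots> = A + B * T"
    by (simp add: A_def B_def T_def power_mult_distrib flip: mult_minus_left power_mult)
  finally have e1: "(L ^ q - L * Y ^ (q - 1)) ^ N = A + B * T" .
  have "(L ^ q - L * Y ^ (q - 1)) ^ k = (A + B * T) ^ r"
    by (simp only: kN power_mult e1)
  moreover have "L ^ (q * k) = A ^ r" by (simp add: A_def kN power_mult mult_ac)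
  ultimately have "(L ^ q - L * Y ^ (q - 1)) ^ k - L ^ (q * k) = (A + B * T) ^ r - A ^ r" by simp
  moreover have "B dvd (A + B * T) ^ r - A ^ r"
    using dvd_power_diff[of "A + B * T" A r] by (auto elim: dvd_trans)
  moreover have "Y ^ k dvd B"
    unfolding B_def using assms(4) by (intro le_imp_power_dvd) (simp add: kN q_def mult.commute)
  ultimately show ?thesis unfolding q_def using dvd_trans by metis
qed



lemma span1: "vec.span {u} = range (\<lambda>c. c *s u)"
  by (rule vec.span_singleton)

lemma line_rep_span:
  assumes "(u::'k::field ^ 'n::finite) \<noteq> 0"
  shows "\<exists>d. d \<noteq> 0 \<and> line_rep (vec.span {u}) = d *s u"
proof -
  have ex: "\<exists>v. v \<in> vec.span {u} \<and> v \<noteq> 0"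
    using assms by (intro exI[of _ u]) (auto intro: vec.span_base)
  have "line_rep (vec.span {u}) \<in> vec.span {u} \<and> line_rep (vec.span {u}) \<noteq> 0"
    unfolding line_rep_def by (rule someI_ex[OF ex])
  then obtain d where "line_rep (vec.span {u}) = d *s u" "d *s u \<noteq> 0"
    by (auto simp: span1)
  thus ?thesis by (intro exI[of _ d]) auto
qed

lemma span_scale_eq:
  assumes "(d::'k::field) \<noteq> 0"
  shows "vec.span {d *s (u::'k ^ 'n::finite)} = vec.span {u}"
proof -
  have "range (\<lambda>c. c *s (d *s u)) = range (\<lambda>c. c *s u)"
  proof (rule subset_antisym)
    show "range (\<lambda>c. c *s u) \<subseteq> range (\<lambda>c. c *s (d *s u))"
    proof
      fix x assume "x \<in> range (\<lambda>c. c *s u)"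
      then obtain c where "x = c *s u" by auto
      hence "x = (c / d) *s (d *s u)" using assms by (simp add: vec.scale_scale)
      thus "x \<in> range (\<lambda>c. c *s (d *s u))" by (rule range_eqI)
    qed
  qed (auto simp: vec.scale_scale)
  thus ?thesis by (simp add: span1)
qed

lemma line_facts:
  assumes "l \<in> lines_of U"
  shows "line_rep l \<in> l" "line_rep l \<noteq> 0" "l = vec.span {line_rep l}"
    "vec.subspace U \<Longrightarrow> line_rep l \<in> U"
proof -
  obtain u where u: "l = vec.span {u}" "u \<in> U" "u \<noteq> 0"
    using assms by (auto simp: lines_of_def)
  obtain d where d: "d \<noteq> 0" "line_rep l = d *s u" using line_rep_span[OF u(3)] u(1) by auto
  show "line_rep l \<in> l" using d u by (auto simp: span1)
  show "line_rep l \<noteq> 0" using d u by simp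
  show "l = vec.span {line_rep l}" using d u span_scale_eq by metis
  show "vec.subspace U \<Longrightarrow> line_rep l \<in> U" using d u by (simp add: vec.subspace_scale)
qed

lemma span_sub: "vec.subspace H \<Longrightarrow> u \<in> H \<Longrightarrow> vec.span {u} \<subseteq> H"
  by (rule vec.span_minimal) auto


context
  fixes y :: "'k::field ^ 'n::finite" and W :: "('k ^ 'n) set"
  assumes y0: "y \<noteq> 0" and sW: "vec.subspace W" and Wy: "W \<inter> vec.span {y} = {0}"
    and WyU: "{w + z | w z. w \<in> W \<and> z \<in> vec.span {y}} = UNIV"
begin

lemma decomp: "\<exists>w c. w \<in> W \<and> u = w + c *s y"
proof -
  have "u \<in> {w + z | w z. w \<in> W \<and> z \<in> vec.span {y}}" using WyU by simp
  thus ?thesis by (auto simp: span1)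
qed

lemma uniq:
  assumes "w1 \<in> W" "w2 \<in> W" "w1 + c1 *s y = w2 + c2 *s y"
  shows "w1 = w2 \<and> c1 = c2"
proof -
  have e: "w1 - w2 = (c2 - c1) *s y" using assms(3)
    by (simp add: algebra_simps vec.scale_left_diff_distrib)
  have "w1 - w2 \<in> W" using assms sW vec.subspace_diff by blast
  moreover have "w1 - w2 \<in> vec.span {y}" unfolding e span1 by (rule rangeI)
  ultimately have "w1 - w2 = 0" using Wy by blast
  hence "w1 = w2" by simp
  moreover have "(c2 - c1) *s y = 0" using e \<open>w1 - w2 = 0\<close> by simp
  hence "c1 = c2" using y0 by simp
  ultimately show ?thesis by simp
qed

lemma y_notin_W: "y \<notin> W"
  using Wy y0 vec.span_base[of y "{y}"] by blast

lemma span_insert_eq: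
  assumes "vec.subspace H" "y \<in> H"
  shows "H = vec.span (insert y (H \<inter> W))"
proof
  show "vec.span (insert y (H \<inter> W)) \<subseteq> H" using assms by (intro vec.span_minimal) auto
  show "H \<subseteq> vec.span (insert y (H \<inter> W))"
  proof
    fix h assume h: "h \<in> H"
    obtain w c where wc: "w \<in> W" "h = w + c *s y" using decomp by blast
    have "w = h - c *s y" using wc by simp
    hence "w \<in> H" using h assms by (simp add: vec.subspace_diff vec.subspace_scale)
    hence "w \<in> vec.span (insert y (H \<inter> W))" using wc by (intro vec.span_base) auto
    moreover have "c *s y \<in> vec.span (insert y (H \<inter> W))"
      by (intro vec.span_scale vec.span_base) auto
    ultimately show "h \<in> vec.span (insert y (H \<inter> W))" unfolding wc(2) by (rule vec.span_add)
  qed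
qed

lemma dim_split:
  assumes "vec.subspace H" "y \<in> H"
  shows "vec.dim H = vec.dim (H \<inter> W) + 1"
proof -
  have s: "vec.subspace (H \<inter> W)" using assms sW vec.subspace_inter by blast
  have sp: "vec.span (H \<inter> W) = H \<inter> W" using vec.span_eq_iff[THEN iffD2, OF s] .
  have "y \<notin> vec.span (H \<inter> W)" unfolding sp using y_notin_W by blast
  hence "vec.dim (insert y (H \<inter> W)) = vec.dim (H \<inter> W) + 1" by (simp add: vec.dim_insert)
  moreover have "vec.dim H = vec.dim (insert y (H \<inter> W))"
    using span_insert_eq[OF assms] vec.dim_span by metis
  ultimately show ?thesis by simp
qed

lemma dim_UNIV: "vec.dim (UNIV :: ('k ^ 'n) set) = vec.dim W + 1"
  using dim_split[of UNIV] by simp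

lemma span_ins_W:
  assumes "vec.subspace H'" "H' \<subseteq> W"
  shows "vec.span (insert y H') \<inter> W = H'"
proof
  show "H' \<subseteq> vec.span (insert y H') \<inter> W" using assms vec.span_superset by blast
  show "vec.span (insert y H') \<inter> W \<subseteq> H'"
  proof
    fix x assume x: "x \<in> vec.span (insert y H') \<inter> W"
    then obtain c where "x - c *s y \<in> vec.span H'" by (auto simp: vec.span_insert)
    moreover have "vec.span H' = H'" using vec.span_eq_iff[THEN iffD2, OF assms(1)] .
    ultimately have h: "x - c *s y \<in> H'" by simp
    have e: "x + 0 *s y = (x - c *s y) + c *s y" by simp
    have "x \<in> W" "x - c *s y \<in> W" using x h assms by auto
    hence "x = x - c *s y" using uniq[OF _ _ e] by blast
    thus "x \<in> H'" using h by metis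
  qed
qed

end



context
  fixes y :: "'k::{field,finite} ^ 'n::finite" and W :: "('k ^ 'n) set"
  assumes y0: "y \<noteq> 0" and sW: "vec.subspace W" and Wy: "W \<inter> vec.span {y} = {0}"
    and WyU: "{w + z | w z. w \<in> W \<and> z \<in> vec.span {y}} = UNIV"
begin

lemmas uniq' = uniq[OF y0 sW Wy WyU]
lemmas decomp' = decomp[OF y0 sW Wy WyU]

lemma L2_facts:
  assumes sH: "vec.subspace H" and yH: "y \<in> H" and l: "l \<in> {l \<in> lines_of W. \<not> l \<subseteq> H \<inter> W}"
  shows "line_rep l \<in> W" "line_rep l \<notin> H" "line_rep l \<noteq> 0" "l = vec.span {line_rep l}"
    "line_rep l + c *s y \<noteq> 0" "line_rep l + c *s y \<notin> H"
proof -
  have lW: "l \<in> lines_of W" and nl: "\<not> l \<subseteq> H \<inter> W" using l by auto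
  show rW: "line_rep l \<in> W" using line_facts(4)[OF lW sW] .
  show r0: "line_rep l \<noteq> 0" using line_facts(2)[OF lW] .
  show leq: "l = vec.span {line_rep l}" using line_facts(3)[OF lW] .
  have sHW: "vec.subspace (H \<inter> W)" using sH sW vec.subspace_inter by blast
  show rH: "line_rep l \<notin> H"
  proof
    assume "line_rep l \<in> H"
    hence "vec.span {line_rep l} \<subseteq> H \<inter> W" using rW sHW by (intro span_sub) auto
    thus False using nl leq by simp
  qed
  show "line_rep l + c *s y \<noteq> 0"
  proof
    assume "line_rep l + c *s y = 0"
    hence "line_rep l + c *s y = 0 + 0 *s y" by simp
    hence "line_rep l = 0" using uniq'[OF rW vec.subspace_0[OF sW]] by blast
    thus False using r0 by simp
  qed
  show "line_rep l + c *s y \<notin> H"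
  proof
    assume "line_rep l + c *s y \<in> H"
    hence "(line_rep l + c *s y) - c *s y \<in> H" using sH yH by (intro vec.subspace_diff vec.subspace_scale) auto
    thus False using rH by simp
  qed
qed

lemma bij_lines:
  assumes sH: "vec.subspace H" and yH: "y \<in> H"
  shows "bij_betw (\<lambda>(l, c). vec.span {line_rep l + c *s y})
           ({l \<in> lines_of W. \<not> l \<subseteq> H \<inter> W} \<times> UNIV) {l \<in> lines_of UNIV. \<not> l \<subseteq> H}"
  unfolding bij_betw_def
proof (intro conjI)
  let ?L2 = "{l \<in> lines_of W. \<not> l \<subseteq> H \<inter> W}"
  show "inj_on (\<lambda>(l, c). vec.span {line_rep l + c *s y}) (?L2 \<times> UNIV)"
  proof (rule inj_onI)
    fix a b assume A: "a \<in> ?L2 \<times> UNIV" "b \<in> ?L2 \<times> UNIV"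
      and E: "(\<lambda>(l, c). vec.span {line_rep l + c *s y}) a = (\<lambda>(l, c). vec.span {line_rep l + c *s y}) b"
    obtain l1 c1 where a: "a = (l1, c1)" by (cases a)
    obtain l2 c2 where b: "b = (l2, c2)" by (cases b)
    have l1: "l1 \<in> lines_of W" "\<not> l1 \<subseteq> H \<inter> W" using A a by auto
    have l2: "l2 \<in> lines_of W" "\<not> l2 \<subseteq> H \<inter> W" using A b by auto
    have eq: "vec.span {line_rep l1 + c1 *s y} = vec.span {line_rep l2 + c2 *s y}" using E a b by simp
    have f1: "line_rep l1 \<in> W" "line_rep l1 \<noteq> 0" "l1 = vec.span {line_rep l1}"
      using L2_facts[OF sH yH, of l1] l1 by auto
    have f2: "line_rep l2 \<in> W" "line_rep l2 \<noteq> 0" "l2 = vec.span {line_rep l2}"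
      using L2_facts[OF sH yH, of l2] l2 by auto
    have "line_rep l1 + c1 *s y \<in> vec.span {line_rep l2 + c2 *s y}"
      unfolding eq[symmetric] by (rule vec.span_base) simp
    then obtain d where d: "line_rep l1 + c1 *s y = d *s (line_rep l2 + c2 *s y)"
      by (auto simp: span1)
    hence "line_rep l1 + c1 *s y = d *s line_rep l2 + (d * c2) *s y"
      by (simp add: vec.scale_right_distrib vec.scale_scale)
    moreover have "d *s line_rep l2 \<in> W" using f2 sW vec.subspace_scale by blast
    ultimately have u: "line_rep l1 = d *s line_rep l2" "c1 = d * c2"
      using uniq'[OF f1(1)] by blast+
    have d0: "d \<noteq> 0" using u f1 by auto
    have "l1 = l2" using f1(3) f2(3) u(1) span_scale_eq[OF d0] by metis
    hence "d *s line_rep l2 = 1 *s line_rep l2" using u by simp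
    hence "d = 1" using f2(2) by (metis vec.scale_cancel_right)
    thus "a = b" using u \<open>l1 = l2\<close> a b by simp
  qed
  show "(\<lambda>(l, c). vec.span {line_rep l + c *s y}) ` (?L2 \<times> UNIV) = {l \<in> lines_of UNIV. \<not> l \<subseteq> H}"
  proof (rule subset_antisym; rule subsetI)
    fix x assume "x \<in> (\<lambda>(l, c). vec.span {line_rep l + c *s y}) ` (?L2 \<times> UNIV)"
    then obtain l c where l: "l \<in> ?L2" and x: "x = vec.span {line_rep l + c *s y}" by auto
    have v0: "line_rep l + c *s y \<noteq> 0" and vH: "line_rep l + c *s y \<notin> H"
      using L2_facts[OF sH yH l] by auto
    have "x \<in> lines_of UNIV" unfolding lines_of_def x using v0 by blast
    moreover have "\<not> x \<subseteq> H" unfolding x using vH vec.span_base[of _ "{line_rep l + c *s y}"] by blast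
    ultimately show "x \<in> {l \<in> lines_of UNIV. \<not> l \<subseteq> H}" by simp
  next
    fix x assume "x \<in> {l \<in> lines_of UNIV. \<not> l \<subseteq> H}"
    then obtain u where x: "x = vec.span {u}" "u \<noteq> 0" and nx: "\<not> x \<subseteq> H"
      by (auto simp: lines_of_def)
    have uH: "u \<notin> H" using nx x sH span_sub by blast
    obtain w c where wc: "w \<in> W" "u = w + c *s y" using decomp' by blast
    have wH: "w \<notin> H"
    proof
      assume "w \<in> H"
      hence "w + c *s y \<in> H" using sH yH by (intro vec.subspace_add vec.subspace_scale) auto
      thus False using uH wc by simp
    qed
    have w0: "w \<noteq> 0" using wH vec.subspace_0[OF sH] by auto
    define l' where "l' = vec.span {w}"
    have l'L: "l' \<in> ?L2"
    proof -
      have "l' \<in> lines_of W" unfolding lines_of_def l'_def using wc w0 by blast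
      moreover have "\<not> l' \<subseteq> H \<inter> W" unfolding l'_def using wH vec.span_base[of w "{w}"] by blast
      ultimately show ?thesis by simp
    qed
    obtain d where d: "d \<noteq> 0" "line_rep l' = d *s w" using line_rep_span[OF w0] l'_def by auto
    have "line_rep l' + (d * c) *s y = d *s u"
      using d wc by (simp add: vec.scale_right_distrib vec.scale_scale)
    hence "vec.span {line_rep l' + (d * c) *s y} = x" using span_scale_eq[OF d(1)] x by simp
    thus "x \<in> (\<lambda>(l, c). vec.span {line_rep l + c *s y}) ` (?L2 \<times> UNIV)"
      using l'L by (intro image_eqI[of _ _ "(l', d * c)"]) auto
  qed
qed


lemma VH_decomp:
  assumes sH: "vec.subspace H" and yH: "y \<in> H"
  shows "\<exists>D. D \<noteq> 0 \<and> VH UNIV H = Cst D * (\<Prod>l\<in>{l \<in> lines_of W. \<not> l \<subseteq> H \<inter> W}.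
            lin (line_rep l) ^ CARD('k) - lin (line_rep l) * lin y ^ (CARD('k) - 1))"
proof -
  let ?L2 = "{l \<in> lines_of W. \<not> l \<subseteq> H \<inter> W}"
  let ?f = "\<lambda>(l, c). vec.span {line_rep l + c *s y}"
  define dd where "dd l c = (SOME d. d \<noteq> 0 \<and> line_rep (vec.span {line_rep l + c *s y}) = d *s (line_rep l + c *s y))" for l c
  have dd: "dd l c \<noteq> 0 \<and> line_rep (vec.span {line_rep l + c *s y}) = dd l c *s (line_rep l + c *s y)"
    if "l \<in> ?L2" for l c
    unfolding dd_def by (rule someI_ex, rule line_rep_span) (use L2_facts[OF sH yH that] in auto)
  have "VH UNIV H = (\<Prod>l\<in>{l \<in> lines_of UNIV. \<not> l \<subseteq> H}. lin (line_rep l))" by (simp add: VH_def)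
  also have "\<dots> = (\<Prod>x\<in>?L2 \<times> UNIV. lin (line_rep (?f x)))"
    by (rule prod.reindex_bij_betw[OF bij_lines[OF sH yH], symmetric])
  also have "\<dots> = (\<Prod>l\<in>?L2. \<Prod>c\<in>UNIV. lin (line_rep (vec.span {line_rep l + c *s y})))"
    unfolding prod.cartesian_product by (rule prod.cong) auto
  also have "\<dots> = (\<Prod>l\<in>?L2. \<Prod>c\<in>UNIV. Cst (dd l c) * (lin (line_rep l) + Cst c * lin y))"
    by (intro prod.cong refl) (simp add: dd lin_scale lin_add Cst_mult algebra_simps)
  also have "\<dots> = (\<Prod>l\<in>?L2. Cst (\<Prod>c\<in>UNIV. dd l c) *
       (lin (line_rep l) ^ CARD('k) - lin (line_rep l) * lin y ^ (CARD('k) - 1)))"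
    by (intro prod.cong refl) (simp add: prod.distrib Cst_prod prod_lin_identity)
  also have "\<dots> = Cst (\<Prod>l\<in>?L2. \<Prod>c\<in>UNIV. dd l c) * (\<Prod>l\<in>?L2.
       lin (line_rep l) ^ CARD('k) - lin (line_rep l) * lin y ^ (CARD('k) - 1))"
    by (simp add: prod.distrib Cst_prod)
  finally have e: "VH UNIV H = \<dots>" .
  have "(\<Prod>l\<in>?L2. \<Prod>c\<in>UNIV. dd l c) \<noteq> 0" using dd by (simp add: prod_zero_iff)
  thus ?thesis using e by blast
qed

lemma VH_cong:
  assumes p: "prime p" "CARD('k) = p ^ e" and k: "k = CARD('k) ^ a * r" "r \<le> CARD('k) - 1"
    and sH: "vec.subspace H" and yH: "y \<in> H"
  shows "\<exists>D. D \<noteq> 0 \<and> lin y ^ k dvd VH UNIV H ^ k - Cst D * VH W (H \<inter> W) ^ (CARD('k) * k)"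
proof -
  let ?L2 = "{l \<in> lines_of W. \<not> l \<subseteq> H \<inter> W}"
  let ?P = "\<lambda>l. lin (line_rep l) ^ CARD('k) - lin (line_rep l) * lin y ^ (CARD('k) - 1)"
  obtain D where D: "D \<noteq> 0" "VH UNIV H = Cst D * (\<Prod>l\<in>?L2. ?P l)"
    using VH_decomp[OF sH yH] by blast
  have e1: "VH UNIV H ^ k = Cst (D ^ k) * (\<Prod>l\<in>?L2. ?P l ^ k)"
    by (simp add: D(2) power_mult_distrib Cst_power prod_power_distrib)
  have e2: "VH W (H \<inter> W) ^ (CARD('k) * k) = (\<Prod>l\<in>?L2. lin (line_rep l) ^ (CARD('k) * k))"
    by (simp add: VH_def prod_power_distrib)
  have "lin y ^ k dvd (\<Prod>l\<in>?L2. ?P l ^ k) - (\<Prod>l\<in>?L2. lin (line_rep l) ^ (CARD('k) * k))"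
    by (intro dvd_prod_diff key_cong[OF p k])
  hence "lin y ^ k dvd Cst (D ^ k) * ((\<Prod>l\<in>?L2. ?P l ^ k) - (\<Prod>l\<in>?L2. lin (line_rep l) ^ (CARD('k) * k)))"
    by (rule dvd_mult)
  hence "lin y ^ k dvd VH UNIV H ^ k - Cst (D ^ k) * VH W (H \<inter> W) ^ (CARD('k) * k)"
    unfolding e1 e2 by (simp add: right_diff_distrib)
  thus ?thesis using D(1) by (intro exI[of _ "D ^ k"]) simp
qed

end



lemma gi_0: "0 \<in> gen_ideal S"
  unfolding gen_ideal_def by (intro CollectI exI[of _ "{}"]) auto

lemma gi_base: "x \<in> S \<Longrightarrow> x \<in> gen_ideal S"
  unfolding gen_ideal_def by (intro CollectI exI[of _ "{x}"] exI[of _ "\<lambda>_. 1"]) auto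

lemma gi_mult: "a \<in> gen_ideal S \<Longrightarrow> b * a \<in> gen_ideal S"
proof -
  assume "a \<in> gen_ideal S"
  then obtain F c where F: "finite F" "F \<subseteq> S" "a = (\<Sum>g\<in>F. c g * g)" by (auto simp: gen_ideal_def)
  hence "b * a = (\<Sum>g\<in>F. (b * c g) * g)" by (simp add: sum_distrib_left mult_ac)
  thus ?thesis using F unfolding gen_ideal_def
    by (intro CollectI exI[of _ F] exI[of _ "\<lambda>g. b * c g"]) auto
qed

lemma gi_add: "a \<in> gen_ideal S \<Longrightarrow> b \<in> gen_ideal S \<Longrightarrow> a + b \<in> gen_ideal S"
proof -
  assume "a \<in> gen_ideal S" "b \<in> gen_ideal S"
  then obtain F1 c1 F2 c2 where F1: "finite F1" "F1 \<subseteq> S" "a = (\<Sum>g\<in>F1. c1 g * g)"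
    and F2: "finite F2" "F2 \<subseteq> S" "b = (\<Sum>g\<in>F2. c2 g * g)" by (auto simp: gen_ideal_def)
  define c where "c g = (if g \<in> F1 then c1 g else 0) + (if g \<in> F2 then c2 g else 0)" for g
  have fin: "finite (F1 \<union> F2)" using F1 F2 by simp
  have "(\<Sum>g\<in>F1 \<union> F2. c g * g) = (\<Sum>g\<in>F1 \<union> F2. (if g \<in> F1 then c1 g * g else 0))
      + (\<Sum>g\<in>F1 \<union> F2. (if g \<in> F2 then c2 g * g else 0))"
  proof -
    have "c g * g = (if g \<in> F1 then c1 g * g else 0) + (if g \<in> F2 then c2 g * g else 0)" for g
      by (simp add: c_def distrib_right)
    thus ?thesis by (simp add: sum.distrib)
  qed
  also have "\<dots> = a + b"
  proof -
    have "(F1 \<union> F2) \<inter> F1 = F1" "(F1 \<union> F2) \<inter> F2 = F2" by auto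
    thus ?thesis using sum.inter_restrict[OF fin, of "\<lambda>g. c1 g * g" F1]
        sum.inter_restrict[OF fin, of "\<lambda>g. c2 g * g" F2] F1(3) F2(3) by simp
  qed
  finally show ?thesis using F1 F2 fin unfolding gen_ideal_def
    by (intro CollectI exI[of _ "F1 \<union> F2"] exI[of _ c]) auto
qed

lemma gi_sum: "finite F \<Longrightarrow> (\<And>g. g \<in> F \<Longrightarrow> f g \<in> gen_ideal S) \<Longrightarrow> sum f F \<in> gen_ideal S"
  by (induct F rule: finite_induct) (auto intro: gi_0 gi_add)

lemma gi_sub: "A \<subseteq> gen_ideal B \<Longrightarrow> gen_ideal A \<subseteq> gen_ideal B"
proof
  fix x assume A: "A \<subseteq> gen_ideal B" and "x \<in> gen_ideal A"
  then obtain F c where F: "finite F" "F \<subseteq> A" "x = (\<Sum>g\<in>F. c g * g)" by (auto simp: gen_ideal_def)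
  show "x \<in> gen_ideal B" unfolding F(3) using F A by (intro gi_sum gi_mult) auto
qed

lemma ideal_sum_eq:
  assumes "\<And>g. g \<in> G1 \<Longrightarrow> g \<in> gen_ideal (gen_ideal G2 \<union> gen_ideal {Y})"
    and "\<And>g. g \<in> G2 \<Longrightarrow> g \<in> gen_ideal (gen_ideal G1 \<union> gen_ideal {Y})"
  shows "ideal_sum (gen_ideal G1) (gen_ideal {Y}) = ideal_sum (gen_ideal G2) (gen_ideal {Y})"
proof -
  have Y: "Y \<in> gen_ideal (gen_ideal G \<union> gen_ideal {Y})" for G :: "'a set"
  proof (rule gi_base)
    show "Y \<in> gen_ideal G \<union> gen_ideal {Y}" using gi_base[of Y "{Y}"] by blast
  qed
  have sub: "gen_ideal (gen_ideal A \<union> gen_ideal {Y}) \<subseteq> gen_ideal (gen_ideal B \<union> gen_ideal {Y})"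
    if h: "\<And>g. g \<in> A \<Longrightarrow> g \<in> gen_ideal (gen_ideal B \<union> gen_ideal {Y})" for A B
  proof (rule gi_sub, rule Un_least)
    show "gen_ideal A \<subseteq> gen_ideal (gen_ideal B \<union> gen_ideal {Y})"
      by (rule gi_sub) (use h in blast)
    show "gen_ideal {Y} \<subseteq> gen_ideal (gen_ideal B \<union> gen_ideal {Y})"
      by (rule gi_sub) (use Y[of B] in blast)
  qed
  show ?thesis unfolding ideal_sum_def
    by (rule subset_antisym[OF sub[of G1 G2] sub[of G2 G1]]) (use assms in auto)
qed

lemma mem_crit:
  assumes "g' \<in> G" "g = u * g' + Y * t"
  shows "g \<in> gen_ideal (gen_ideal G \<union> gen_ideal {Y})"
proof -
  have a: "g' \<in> gen_ideal (gen_ideal G \<union> gen_ideal {Y})"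
  proof (rule gi_base)
    show "g' \<in> gen_ideal G \<union> gen_ideal {Y}" using gi_base[OF assms(1)] by blast
  qed
  have b: "Y \<in> gen_ideal (gen_ideal G \<union> gen_ideal {Y})"
  proof (rule gi_base)
    show "Y \<in> gen_ideal G \<union> gen_ideal {Y}" using gi_base[of Y "{Y}"] by blast
  qed
  have "g = u * g' + t * Y" using assms(2) by (simp add: mult.commute)
  thus ?thesis using gi_add[OF gi_mult[OF a] gi_mult[OF b]] by simp
qed



theorem lemma4p5:
  fixes y :: "'k::{field, finite} ^ 'n::finite"
    and W :: "('k ^ 'n) set"
    and p q a r k :: nat
  assumes "prime p" and "CARD('k) = q" and "\<exists>e. q = p ^ e"
    and "k = q ^ a * r" and "1 \<le> r" and "r \<le> q - 1"
    and "y \<noteq> 0"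
    and "vec.subspace W"
    and "W \<inter> vec.span {y} = {0}"
    and "{w + z | w z. w \<in> W \<and> z \<in> vec.span {y}} = UNIV"
  shows "ideal_sum (I_ideal UNIV k) (gen_ideal {lin y ^ k})
       = ideal_sum (I_ideal W (q * k)) (gen_ideal {lin y ^ k})"
proof -
  obtain e where qe: "q = p ^ e" using assms(3) by blast
  have cardk: "CARD('k) = p ^ e" using assms(2) qe by simp
  have q: "q = CARD('k)" using assms(2) by simp
  have kk: "k = CARD('k) ^ a * r" "r \<le> CARD('k) - 1" using assms(4,6) q by auto
  note cong = VH_cong[OF assms(7,8,9,10) assms(1) cardk kk]
  note dsplit = dim_split[OF assms(7,8,9,10)]
  note dU = dim_UNIV[OF assms(7,8,9,10)]
  note sinsW = span_ins_W[OF assms(7,8,9,10)]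
  let ?G1 = "{VH (UNIV :: ('k ^ 'n) set) H ^ k | H. H \<in> hyperplanes_of UNIV}"
  let ?G2 = "{VH W H ^ (q * k) | H. H \<in> hyperplanes_of W}"
  show ?thesis unfolding I_ideal_def
  proof (rule ideal_sum_eq)
    fix g assume "g \<in> ?G1"
    then obtain H where H: "H \<in> hyperplanes_of UNIV" "g = VH UNIV H ^ k" by blast
    have sH: "vec.subspace H" and dH: "vec.dim H + 1 = vec.dim (UNIV :: ('k ^ 'n) set)"
      using H(1) unfolding hyperplanes_of_def by blast+
    show "g \<in> gen_ideal (gen_ideal ?G2 \<union> gen_ideal {lin y ^ k})"
    proof (cases "y \<in> H")
      case True
      obtain D where D: "D \<noteq> 0"
        "lin y ^ k dvd VH UNIV H ^ k - Cst D * VH W (H \<inter> W) ^ (CARD('k) * k)"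
        using cong[OF sH True] by blast
      then obtain t where t: "VH UNIV H ^ k - Cst D * VH W (H \<inter> W) ^ (CARD('k) * k) = lin y ^ k * t"
        by (elim dvdE) blast
      have hyp: "H \<inter> W \<in> hyperplanes_of W"
      proof -
        have "vec.subspace (H \<inter> W)" using sH assms(8) vec.subspace_inter by blast
        moreover have "vec.dim (H \<inter> W) + 1 = vec.dim W"
          using dsplit[OF sH True] dU dH by simp
        ultimately show ?thesis by (auto simp: hyperplanes_of_def)
      qed
      show ?thesis
      proof (rule mem_crit[where g'="VH W (H \<inter> W) ^ (q * k)" and u="Cst D" and t=t])
        show "VH W (H \<inter> W) ^ (q * k) \<in> ?G2" using hyp by blast
        show "g = Cst D * VH W (H \<inter> W) ^ (q * k) + lin y ^ k * t"
          using t H(2) q by (simp add: algebra_simps)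
      qed
    next
      case False
      have l1: "vec.span {y} \<in> {l \<in> lines_of UNIV. \<not> l \<subseteq> H}"
        using False assms(7) vec.span_base[of y "{y}"] by (auto simp: lines_of_def)
      obtain d where d: "line_rep (vec.span {y}) = d *s y" using line_rep_span[OF assms(7)] by blast
      have "lin y dvd lin (line_rep (vec.span {y}))" unfolding d lin_scale by simp
      also have "lin (line_rep (vec.span {y})) dvd VH UNIV H"
        unfolding VH_def by (rule dvd_prodI[OF _ l1]) simp
      finally have "lin y ^ k dvd VH UNIV H ^ k" by (rule dvd_power_same)
      then obtain t where t: "g = t * lin y ^ k" using H(2) by (auto elim!: dvdE simp: mult.commute)
      have "g \<in> gen_ideal {lin y ^ k}" unfolding t by (intro gi_mult gi_base) simp
      thus ?thesis by (intro gi_base) simp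
    qed
  next
    fix g assume "g \<in> ?G2"
    then obtain H' where H': "H' \<in> hyperplanes_of W" "g = VH W H' ^ (q * k)" by blast
    have sH': "vec.subspace H'" and H'W: "H' \<subseteq> W" and dH': "vec.dim H' + 1 = vec.dim W"
      using H'(1) unfolding hyperplanes_of_def by blast+
    define H where "H = vec.span (insert y H')"
    have sH: "vec.subspace H" unfolding H_def by simp
    have yH: "y \<in> H" unfolding H_def by (rule vec.span_base) simp
    have HW: "H \<inter> W = H'" unfolding H_def using sinsW[OF sH' H'W] .
    have hyp: "H \<in> hyperplanes_of UNIV"
      using dsplit[OF sH yH] HW dH' dU sH by (auto simp: hyperplanes_of_def)
    obtain D where D: "D \<noteq> 0"
      "lin y ^ k dvd VH UNIV H ^ k - Cst D * VH W (H \<inter> W) ^ (CARD('k) * k)"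
      using cong[OF sH yH] by blast
    then obtain t where t: "VH UNIV H ^ k - Cst D * VH W H' ^ (q * k) = lin y ^ k * t"
      using HW q by (auto elim!: dvdE)
    have inv: "Cst (inverse D) * Cst D = 1" using D(1) by (simp flip: Cst_mult)
    show "g \<in> gen_ideal (gen_ideal ?G1 \<union> gen_ideal {lin y ^ k})"
    proof (rule mem_crit[where g'="VH UNIV H ^ k" and u="Cst (inverse D)" and t="- (Cst (inverse D) * t)"])
      show "VH UNIV H ^ k \<in> ?G1" using hyp by blast
      have "VH UNIV H ^ k = Cst D * g + lin y ^ k * t" using t H'(2) by (simp add: algebra_simps)
      hence "Cst (inverse D) * VH UNIV H ^ k = (Cst (inverse D) * Cst D) * g + Cst (inverse D) * (lin y ^ k * t)"
        by (simp add: algebra_simps)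
      thus "g = Cst (inverse D) * VH UNIV H ^ k + lin y ^ k * - (Cst (inverse D) * t)"
        unfolding inv by (simp add: algebra_simps)
    qed
  qed
qed


end
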